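(* Let $\mathrm{Var}$ be a variety of algebras with one binary multiplication defined by multilinear identities. If a multilinear polynomial $f$ in the operations $\cdot,\prec,\succ$ is an identity of all algebras over the operad $\mathrm{Var}\circ\mathrm{GD}^!$ (under the identification described below), then $f$ is a generalized derived identity of $\mathrm{Var}$.
   Context: For an algebra $A$ with derivation $d$, $A^{(d* )}=(A,\cdot,\prec,\succ)$ with $\cdot$ the original product, $x\prec y=x\,d(y)$, $x\succ y=d(x)\,y$; $f$ is a generalized derived identity of $\mathrm{Var}$ if $f=0$ on $A^{(d* )}$ for all $A\in\mathrm{Var}$ and all derivations $d$. The operad $\mathrm{Var}$ has components $\mathrm{Var}(n)$ = multilinear elements of degree $n$ in the free $\mathrm{Var}$-algebra on $x_1,x_2,\dots$. A $\mathrm{GD}^!$-algebra is a vector space with operations $*$, $\star$ such that $*$ is associative and commutative, $(x\star y)\star z-x\star(y\star z)=(x\star z)\star y-x\star(z\star y)$, $x\star(y\star z)=y\star(x\star z)$, $x\star(y*z)=(x\star y)*z$, $x\star(y*z)+y\star(x*z)=(x*y)\star z$; $\mathrm{GD}^!$ is the corresponding operad. The Hadamard product $\mathcal P\otimes\mathcal Q$ of operads has components $\mathcal P(n)\otimes\mathcal Q(n)$ with componentwise composition and symmetric group action; the Manin white product $\mathcal P\circ\mathcal Q$ is the suboperad of $\mathcal P\otimes\mathcal Q$ generated by $\mathcal P(2)\otimes\mathcal Q(2)$. The operations of $\mathrm{Var}\circ\mathrm{GD}^!$ are identified as $x_1\cdot x_2=x_1x_2\otimes(x_1*x_2)$, $x_1\succ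 x_2=x_1x_2\otimes(x_1\star x_2)$, $x_1\prec x_2=x_1x_2\otimes(x_2\star x_1)$. *)

theory Defs
  imports Main "HOL.Vector_Spaces"
begin

text \<open>Binary trees (nonassociative monomials) with internal nodes labelled by
operation symbols and leaves labelled by variable indices (x_i is Leaf i).\<close>
datatype 'o btree = Leaf nat | Node 'o "'o btree" "'o btree"

fun leaves :: "'o btree \<Rightarrow> nat list" where
  "leaves (Leaf i) = [i]"
| "leaves (Node g l r) = leaves l @ leaves r"

fun subst :: "(nat \<Rightarrow> 'o btree) \<Rightarrow> 'o btree \<Rightarrow> 'o btree" where
  "subst w (Leaf i) = w i"
| "subst w (Node g l r) = Node g (subst w l) (subst w r)"

text \<open>A polynomial is a finitely supported coefficient function on monomials.\<close>
definition multilin :: "nat \<Rightarrow> ('o btree \<Rightarrow> 'k::zero) \<Rightarrow> bool" where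
  "multilin n p \<longleftrightarrow> finite {t. p t \<noteq> 0} \<and>
     (\<forall>t. p t \<noteq> 0 \<longrightarrow> distinct (leaves t) \<and> set (leaves t) = {0..<n})"

fun eval :: "('o \<Rightarrow> 'a \<Rightarrow> 'a \<Rightarrow> 'a) \<Rightarrow> (nat \<Rightarrow> 'a) \<Rightarrow> 'o btree \<Rightarrow> 'a" where
  "eval ops a (Leaf i) = a i"
| "eval ops a (Node g l r) = ops g (eval ops a l) (eval ops a r)"

definition evalp :: "('k::zero \<Rightarrow> 'a \<Rightarrow> 'a::comm_monoid_add) \<Rightarrow> ('o \<Rightarrow> 'a \<Rightarrow> 'a \<Rightarrow> 'a)
    \<Rightarrow> (nat \<Rightarrow> 'a) \<Rightarrow> ('o btree \<Rightarrow> 'k) \<Rightarrow> 'a" where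
  "evalp sc ops a p = (\<Sum>t\<in>{t. p t \<noteq> 0}. sc (p t) (eval ops a t))"

definition lin :: "('k::comm_monoid_add \<times> 'o btree) list \<Rightarrow> 'o btree \<Rightarrow> 'k" where
  "lin l = (\<lambda>t. sum_list (map fst (filter (\<lambda>(c,s). s = t) l)))"

definition pmap :: "('b \<Rightarrow> 'c) \<Rightarrow> ('b \<Rightarrow> 'k::comm_monoid_add) \<Rightarrow> 'c \<Rightarrow> 'k" where
  "pmap g p = (\<lambda>t. \<Sum>s\<in>{s. p s \<noteq> 0 \<and> g s = t}. p s)"

inductive_set lspan :: "('b \<Rightarrow> 'k::comm_ring_1) set \<Rightarrow> ('b \<Rightarrow> 'k) set" for B where
  zero: "(\<lambda>_. 0) \<in> lspan B"
| step: "b \<in> B \<Longrightarrow> v \<in> lspan B \<Longrightarrow> (\<lambda>x. c * b x + v x) \<in> lspan B"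

definition is_algebra :: "('k::field \<Rightarrow> 'a::ab_group_add \<Rightarrow> 'a) \<Rightarrow> ('a \<Rightarrow> 'a \<Rightarrow> 'a) \<Rightarrow> bool" where
  "is_algebra sc m \<longleftrightarrow> vector_space sc \<and>
     (\<forall>x y z. m (x + y) z = m x z + m y z \<and> m x (y + z) = m x y + m x z) \<and>
     (\<forall>c x y. m (sc c x) y = sc c (m x y) \<and> m x (sc c y) = sc c (m x y))"

definition in_variety :: "(unit btree \<Rightarrow> 'k) set \<Rightarrow> ('k::field \<Rightarrow> 'a::ab_group_add \<Rightarrow> 'a)
    \<Rightarrow> ('a \<Rightarrow> 'a \<Rightarrow> 'a) \<Rightarrow> bool" where
  "in_variety S sc m \<longleftrightarrow> is_algebra sc m \<and> (\<forall>p\<in>S. \<forall>a. evalp sc (\<lambda>_. m) a p = 0)"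

definition is_derivation :: "('k::field \<Rightarrow> 'a::ab_group_add \<Rightarrow> 'a) \<Rightarrow> ('a \<Rightarrow> 'a \<Rightarrow> 'a)
    \<Rightarrow> ('a \<Rightarrow> 'a) \<Rightarrow> bool" where
  "is_derivation sc m d \<longleftrightarrow>
     (\<forall>x y. d (x + y) = d x + d y) \<and> (\<forall>c x. d (sc c x) = sc c (d x)) \<and>
     (\<forall>x y. d (m x y) = m (d x) y + m x (d y))"

datatype op3 = Dot | Prec | Succ

fun dstar_ops :: "('a \<Rightarrow> 'a \<Rightarrow> 'a) \<Rightarrow> ('a \<Rightarrow> 'a) \<Rightarrow> op3 \<Rightarrow> 'a \<Rightarrow> 'a \<Rightarrow> 'a" where
  "dstar_ops m d Dot x y = m x y"
| "dstar_ops m d Prec x y = m x (d y)"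
| "dstar_ops m d Succ x y = m (d x) y"

text \<open>f is a generalized derived identity of Var (the variety given by S) if f
vanishes on A^(d*) for all A in Var and all derivations d.  Since the
carrier type is arbitrary, this is stated in the main theorem by quantifying
over a free type variable.\<close>

text \<open>GStar is the operation * (commutative associative), Star is the operation \<star>.\<close>
datatype gdop = GStar | Star

abbreviation (input) xv :: "nat \<Rightarrow> 'o btree" where "xv i \<equiv> Leaf i"

definition gd_rels :: "(gdop btree \<Rightarrow> 'k::comm_ring_1) set" where
  "gd_rels = {
     lin [(1, Node GStar (xv 0) (xv 1)), (-1, Node GStar (xv 1) (xv 0))],
     lin [(1, Node GStar (Node GStar (xv 0) (xv 1)) (xv 2)),
          (-1, Node GStar (xv 0) (Node GStar (xv 1) (xv 2)))],
     lin [(1, Node Star (Node Star (xv 0) (xv 1)) (xv 2)),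
          (-1, Node Star (xv 0) (Node Star (xv 1) (xv 2))),
          (-1, Node Star (Node Star (xv 0) (xv 2)) (xv 1)),
          (1, Node Star (xv 0) (Node Star (xv 2) (xv 1)))],
     lin [(1, Node Star (xv 0) (Node Star (xv 1) (xv 2))),
          (-1, Node Star (xv 1) (Node Star (xv 0) (xv 2)))],
     lin [(1, Node Star (xv 0) (Node GStar (xv 1) (xv 2))),
          (-1, Node GStar (Node Star (xv 0) (xv 1)) (xv 2))],
     lin [(1, Node Star (xv 0) (Node GStar (xv 1) (xv 2))),
          (1, Node Star (xv 1) (Node GStar (xv 0) (xv 2))),
          (-1, Node Star (Node GStar (xv 0) (xv 1)) (xv 2))]}"

text \<open>The consequences of a set P of identities: images of an identity p under
a substitution of monomials w for the variables, placed into a context c at the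
unique occurrence of the variable h.  Their span is the T-ideal generated by P,
and P(n) (the multilinear part of the free algebra) is the space of multilinear
degree-n polynomials modulo (the degree n part of) this span.\<close>
definition consq :: "('o btree \<Rightarrow> 'k::comm_monoid_add) set \<Rightarrow> ('o btree \<Rightarrow> 'k) set" where
  "consq P = {pmap (\<lambda>s. subst (\<lambda>i. if i = h then subst w s else Leaf i) c) p
              | p w c h. p \<in> P \<and> length (filter (\<lambda>i. i = h) (leaves c)) = 1}"

definition delta :: "'b \<Rightarrow> 'b \<Rightarrow> 'k::zero_neq_one" where
  "delta w = (\<lambda>t. if t = w then 1 else 0)"

definition tens :: "('b \<Rightarrow> 'k::times) \<Rightarrow> ('c \<Rightarrow> 'k) \<Rightarrow> ('b \<times> 'c) \<Rightarrow> 'k" where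
  "tens r s = (\<lambda>(u, v). r u * s v)"

text \<open>Kernel of the map  (free space on Var-monomials) \<otimes> (free space on
GD^!-monomials) \<rightarrow> Var(n) \<otimes> GD^!(n), i.e. R_Var \<otimes> M + M \<otimes> R_GD.\<close>
definition hadamard_kernel :: "(unit btree \<Rightarrow> 'k::field) set \<Rightarrow> ((unit btree \<times> gdop btree) \<Rightarrow> 'k) set" where
  "hadamard_kernel S = lspan ({tens r (delta w) | r w. r \<in> consq S}
                             \<union> {tens (delta w) r | r w. r \<in> consq gd_rels})"

text \<open>The identification of cdot, prec, succ with elements of Var(2) \<otimes> GD^!(2):
 x1 . x2 = x1x2 \<otimes> (x1 * x2),  x1 \<succ> x2 = x1x2 \<otimes> (x1 \<star> x2),
 x1 \<prec> x2 = x1x2 \<otimes> (x2 \<star> x1), extended to monomials by componentwise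
composition.\<close>
fun var_part :: "op3 btree \<Rightarrow> unit btree" where
  "var_part (Leaf i) = Leaf i"
| "var_part (Node g l r) = Node () (var_part l) (var_part r)"

fun gd_part :: "op3 btree \<Rightarrow> gdop btree" where
  "gd_part (Leaf i) = Leaf i"
| "gd_part (Node Dot l r) = Node GStar (gd_part l) (gd_part r)"
| "gd_part (Node Succ l r) = Node Star (gd_part l) (gd_part r)"
| "gd_part (Node Prec l r) = Node Star (gd_part r) (gd_part l)"

text \<open>f is an identity of all algebras over Var \<circ> GD^! iff its image in the
component (Var \<circ> GD^!)(n) \<subseteq> Var(n) \<otimes> GD^!(n) is zero.\<close>
definition white_identity :: "(unit btree \<Rightarrow> 'k::field) set \<Rightarrow> (op3 btree \<Rightarrow> 'k) \<Rightarrow> bool" where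
  "white_identity S f \<longleftrightarrow>
     pmap (\<lambda>t. (var_part t, gd_part t)) f \<in> hadamard_kernel S"

end

theory Submission
  imports Defs "HOL-Library.Function_Algebras"
begin


definition bilin :: "('k::field \<Rightarrow> 'b::ab_group_add \<Rightarrow> 'b) \<Rightarrow> ('b \<Rightarrow> 'b \<Rightarrow> 'b) \<Rightarrow> bool" where
  "bilin sc op \<longleftrightarrow> (\<forall>x y z. op (x + y) z = op x z + op y z \<and> op x (y + z) = op x y + op x z) \<and>
     (\<forall>c x y. op (sc c x) y = sc c (op x y) \<and> op x (sc c y) = sc c (op x y))"

lemma bilin_zero:
  assumes "bilin sc op"
  shows "op 0 y = 0" "op y 0 = 0"
proof -
  have "op (0+0) y = op 0 y + op 0 y" using assms unfolding bilin_def by blast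
  then show "op 0 y = 0" by simp
  have "op y (0+0) = op y 0 + op y 0" using assms unfolding bilin_def by blast
  then show "op y 0 = 0" by simp
qed

lemma eval_subst: "eval ops b (subst w t) = eval ops (\<lambda>i. eval ops b (w i)) t"
  by (induction t) auto

lemma eval_upd_notin: "h \<notin> set (leaves c) \<Longrightarrow> eval ops (b(h:=y)) c = eval ops b c"
  by (induction c) auto

lemma eval_cong_leaves: "(\<And>i. i \<in> set (leaves c) \<Longrightarrow> b i = b' i) \<Longrightarrow> eval ops b c = eval ops b' c"
  by (induction c) auto

lemma cnt_notin: "length (filter (\<lambda>i. i = h) xs) = 0 \<Longrightarrow> h \<notin> set xs"
  by (induction xs) (auto split: if_splits)

lemma ctx_lin_aux:
  assumes bl: "\<And>g. bilin sc (ops g)"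
  shows "length (filter (\<lambda>i. i = h) (leaves c)) = 1 \<Longrightarrow>
    eval ops (b(h:=0)) c = 0 \<and>
    eval ops (b(h:=y+z)) c = eval ops (b(h:=y)) c + eval ops (b(h:=z)) c \<and>
    eval ops (b(h:=sc k y)) c = sc k (eval ops (b(h:=y)) c)"
proof (induction c)
  case (Leaf x)
  then have "x = h" by (cases "x = h") auto
  then show ?case by simp
next
  case (Node g l r)
  have len: "length (filter (\<lambda>i. i = h) (leaves l)) + length (filter (\<lambda>i. i = h) (leaves r)) = 1"
    using Node.prems by simp
  have bg: "bilin sc (ops g)" by (rule bl)
  have a1: "\<And>x y z. ops g (x + y) z = ops g x z + ops g y z"
    and a2: "\<And>x y z. ops g x (y + z) = ops g x y + ops g x z"
    and s1: "\<And>c x y. ops g (sc c x) y = sc c (ops g x y)"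
    and s2: "\<And>c x y. ops g x (sc c y) = sc c (ops g x y)"
    using bg unfolding bilin_def by blast+
  note z = bilin_zero[OF bg]
  show ?case
  proof (cases "length (filter (\<lambda>i. i = h) (leaves l)) = 1")
    case True
    then have "length (filter (\<lambda>i. i = h) (leaves r)) = 0" using len by simp
    then have "h \<notin> set (leaves r)" by (rule cnt_notin)
    then have er: "\<And>y. eval ops (b(h:=y)) r = eval ops b r" by (rule eval_upd_notin)
    show ?thesis using Node.IH(1)[OF True]
      by (simp only: eval.simps er a1 a2 s1 s2 z)
  next
    case False
    then have 1: "length (filter (\<lambda>i. i = h) (leaves r)) = 1" and "length (filter (\<lambda>i. i = h) (leaves l)) = 0"
      using len by arith+
    then have "h \<notin> set (leaves l)" using cnt_notin[of h "leaves l"] by blast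
    then have el: "\<And>y. eval ops (b(h:=y)) l = eval ops b l" by (rule eval_upd_notin)
    show ?thesis using Node.IH(2)[OF 1]
      by (simp only: eval.simps el a1 a2 s1 s2 z)
  qed
qed

lemma ctx_lin:
  assumes bl: "\<And>g. bilin sc (ops g)"
    and h: "length (filter (\<lambda>i. i = h) (leaves c)) = 1"
  shows "eval ops (b(h:=0)) c = 0"
    "eval ops (b(h:=y+z)) c = eval ops (b(h:=y)) c + eval ops (b(h:=z)) c"
    "eval ops (b(h:=sc k y)) c = sc k (eval ops (b(h:=y)) c)"
  using ctx_lin_aux[where ops=ops, OF bl h] by blast+

lemma ctx_sum:
  assumes bl: "\<And>g. bilin sc (ops g)"
    and h: "length (filter (\<lambda>i. i = h) (leaves c)) = 1"
  shows "eval ops (b(h:=(\<Sum>s\<in>S. sc (p s) (y s)))) c = (\<Sum>s\<in>S. sc (p s) (eval ops (b(h:=y s)) c))"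
proof (induction S rule: infinite_finite_induct)
  case (infinite A)
  then have "(\<Sum>s\<in>A. sc (p s) (y s)) = 0" "(\<Sum>s\<in>A. sc (p s) (eval ops (b(h:=y s)) c)) = 0" by simp_all
  then show ?case using ctx_lin(1)[where ops=ops, OF bl h] by (simp only:)
next
  case empty
  then show ?case using ctx_lin(1)[where ops=ops, OF bl h] by (simp only: sum.empty)
next
  case (insert x F)
  then show ?case by (simp only: sum.insert[OF insert(1,2)] ctx_lin(2,3)[where ops=ops, OF bl h] insert(3))
qed

definition lsum :: "('k::zero \<Rightarrow> 'a \<Rightarrow> 'a::comm_monoid_add) \<Rightarrow> ('b \<Rightarrow> 'a) \<Rightarrow> ('b \<Rightarrow> 'k) \<Rightarrow> 'a" where
  "lsum sc h p = (\<Sum>t\<in>{t. p t \<noteq> 0}. sc (p t) (h t))"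

lemma evalp_lsum: "evalp sc ops a p = lsum sc (eval ops a) p"
  by (simp add: evalp_def lsum_def)

lemma lsum_pmap:
  assumes ms: "module sc" and fin: "finite {s. p s \<noteq> 0}"
  shows "lsum sc h (pmap g p) = (\<Sum>s\<in>{s. p s \<noteq> 0}. sc (p s) (h (g s)))"
proof -
  interpret module sc by (rule ms)
  let ?P = "{s. p s \<noteq> 0}"
  have sub: "{t. pmap g p t \<noteq> 0} \<subseteq> g ` ?P"
  proof
    fix t assume "t \<in> {t. pmap g p t \<noteq> 0}"
    then have "{s. p s \<noteq> 0 \<and> g s = t} \<noteq> {}" unfolding pmap_def by force
    then show "t \<in> g ` ?P" by auto
  qed
  have "lsum sc h (pmap g p) = (\<Sum>t\<in>g ` ?P. sc (pmap g p t) (h t))"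
    unfolding lsum_def by (rule sum.mono_neutral_left) (use fin sub in auto)
  also have "\<dots> = (\<Sum>t\<in>g ` ?P. \<Sum>s\<in>{s\<in>?P. g s = t}. sc (p s) (h (g s)))"
  proof (rule sum.cong[OF refl])
    fix t assume "t \<in> g ` ?P"
    have "sc (pmap g p t) (h t) = (\<Sum>s\<in>{s\<in>?P. g s = t}. sc (p s) (h t))"
      unfolding pmap_def by (simp add: scale_sum_left)
    also have "\<dots> = (\<Sum>s\<in>{s\<in>?P. g s = t}. sc (p s) (h (g s)))"
      by (rule sum.cong) auto
    finally show "sc (pmap g p t) (h t) = \<dots>" .
  qed
  also have "\<dots> = (\<Sum>s\<in>?P. sc (p s) (h (g s)))"
    by (rule sum.image_gen[symmetric]) (rule fin)
  finally show ?thesis .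
qed

lemma consq_zero:
  assumes ms: "module sc" and bl: "\<And>g. bilin sc (ops g)"
    and fin: "finite {s. p s \<noteq> 0}"
    and id: "\<And>b. evalp sc ops b p = 0"
    and h: "length (filter (\<lambda>i. i = h) (leaves c)) = 1"
  shows "evalp sc ops b (pmap (\<lambda>s. subst (\<lambda>i. if i = h then subst w s else Leaf i) c) p) = 0"
proof -
  interpret module sc by (rule ms)
  let ?P = "{s. p s \<noteq> 0}"
  have "evalp sc ops b (pmap (\<lambda>s. subst (\<lambda>i. if i = h then subst w s else Leaf i) c) p)
     = (\<Sum>s\<in>?P. sc (p s) (eval ops b (subst (\<lambda>i. if i = h then subst w s else Leaf i) c)))"
    unfolding evalp_lsum by (rule lsum_pmap[OF ms fin])
  also have "\<dots> = (\<Sum>s\<in>?P. sc (p s) (eval ops (b(h := eval ops b (subst w s))) c))"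
  proof (rule sum.cong[OF refl])
    fix s
    have "(\<lambda>i. eval ops b (if i = h then subst w s else Leaf i)) = b(h := eval ops b (subst w s))"
      by auto
    then show "sc (p s) (eval ops b (subst (\<lambda>i. if i = h then subst w s else Leaf i) c)) =
       sc (p s) (eval ops (b(h := eval ops b (subst w s))) c)" by (simp add: eval_subst)
  qed
  also have "\<dots> = eval ops (b(h:=(\<Sum>s\<in>?P. sc (p s) (eval ops b (subst w s))))) c"
    by (rule ctx_sum[where ops=ops, OF bl h, symmetric])
  also have "(\<Sum>s\<in>?P. sc (p s) (eval ops b (subst w s))) = evalp sc ops (\<lambda>i. eval ops b (w i)) p"
    by (simp add: evalp_def eval_subst)
  also have "\<dots> = 0" by (rule id)
  also have "eval ops (b(h:=0)) c = 0" by (rule ctx_lin(1)[where ops=ops, OF bl h])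
  finally show ?thesis .
qed




type_synonym sg = "nat \<Rightarrow> nat option"

definition cmul :: "(sg \<Rightarrow> 'k::comm_ring_1) \<Rightarrow> (sg \<Rightarrow> 'k) \<Rightarrow> sg \<Rightarrow> 'k" where
  "cmul F G = (\<lambda>\<sigma>. \<Sum>A\<in>Pow (dom \<sigma>). F (\<sigma> |` A) * G (\<sigma> |` (dom \<sigma> - A)))"

definition cder :: "(sg \<Rightarrow> 'k::comm_ring_1) \<Rightarrow> sg \<Rightarrow> 'k" where
  "cder F = (\<lambda>\<sigma>. \<Sum>i\<in>dom \<sigma>. if \<sigma> i = Some 0 then 0 else F (\<sigma>(i \<mapsto> the (\<sigma> i) - 1)))"

definition scC :: "'k::comm_ring_1 \<Rightarrow> (sg \<Rightarrow> 'k) \<Rightarrow> sg \<Rightarrow> 'k" where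
  "scC c F = (\<lambda>\<sigma>. c * F \<sigma>)"

lemma upd_restrict_in: "i \<in> A \<Longrightarrow> (\<sigma>(i \<mapsto> v)) |` A = (\<sigma> |` A)(i \<mapsto> v)"
  by (auto simp: restrict_map_def fun_eq_iff)

lemma upd_restrict_out: "i \<notin> A \<Longrightarrow> (\<sigma>(i \<mapsto> v)) |` A = \<sigma> |` A"
  by (auto simp: restrict_map_def fun_eq_iff)

lemma cmul_inf: "infinite (dom \<sigma>) \<Longrightarrow> cmul F G \<sigma> = 0"
  by (simp add: cmul_def)

lemma cmul_comm: "cmul F G = cmul G F"
proof (rule ext)
  fix \<sigma> :: sg
  show "cmul F G \<sigma> = cmul G F \<sigma>"
    unfolding cmul_def
    by (rule sum.reindex_bij_witness[where i="\<lambda>A. dom \<sigma> - A" and j="\<lambda>A. dom \<sigma> - A"])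
      (auto simp: double_diff mult.commute)
qed

lemma cmul_assoc: "cmul (cmul F G) H = cmul F (cmul G H)"
proof (rule ext)
  fix \<sigma> :: sg
  define D where "D = dom \<sigma>"
  show "cmul (cmul F G) H \<sigma> = cmul F (cmul G H) \<sigma>"
  proof (cases "finite D")
    case False
    then show ?thesis by (simp add: cmul_inf D_def)
  next
    case fin: True
    have dd: "\<And>a b. b \<subseteq> a \<Longrightarrow> D - b - (a - b) = D - a" by auto
    have "cmul (cmul F G) H \<sigma> = (\<Sum>A\<in>Pow D. \<Sum>B\<in>Pow A. F (\<sigma> |` B) * G (\<sigma> |` (A - B)) * H (\<sigma> |` (D - A)))"
      unfolding cmul_def D_def[symmetric]
    proof (rule sum.cong[OF refl])
      fix A assume A: "A \<in> Pow D"
      then have "D \<inter> A = A" by auto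
      moreover have "\<And>B. B \<in> Pow A \<Longrightarrow> A \<inter> B = B \<and> A \<inter> (A - B) = A - B" by auto
      ultimately show "(\<Sum>B\<in>Pow (dom (\<sigma> |` A)). F (\<sigma> |` A |` B) * G (\<sigma> |` A |` (dom (\<sigma> |` A) - B))) * H (\<sigma> |` (D - A))
         = (\<Sum>B\<in>Pow A. F (\<sigma> |` B) * G (\<sigma> |` (A - B)) * H (\<sigma> |` (D - A)))"
        by (auto simp: D_def[symmetric] sum_distrib_right intro!: sum.cong)
    qed
    also have "\<dots> = (\<Sum>(A, B)\<in>Sigma (Pow D) Pow. F (\<sigma> |` B) * G (\<sigma> |` (A - B)) * H (\<sigma> |` (D - A)))"
      by (rule sum.Sigma) (use fin in \<open>auto intro: finite_subset\<close>)
    also have "\<dots> = (\<Sum>(B, C)\<in>Sigma (Pow D) (\<lambda>B. Pow (D - B)). F (\<sigma> |` B) * G (\<sigma> |` C) * H (\<sigma> |` (D - B - C)))"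
      by (rule sum.reindex_bij_witness[where i="\<lambda>(B, C). (B \<union> C, B)" and j="\<lambda>(A, B). (B, A - B)"])
        (auto simp: Diff_Un Int_commute dd)
    also have "\<dots> = (\<Sum>B\<in>Pow D. \<Sum>C\<in>Pow (D - B). F (\<sigma> |` B) * G (\<sigma> |` C) * H (\<sigma> |` (D - B - C)))"
      by (rule sum.Sigma[symmetric]) (use fin in auto)
    also have "\<dots> = cmul F (cmul G H) \<sigma>"
      unfolding cmul_def D_def[symmetric]
    proof (rule sum.cong[OF refl])
      fix B assume B: "B \<in> Pow D"
      have "D \<inter> (D - B) = D - B" by auto
      moreover have "\<And>C. C \<in> Pow (D - B) \<Longrightarrow> (D - B) \<inter> C = C \<and> (D - B) \<inter> (D - B - C) = D - B - C" by auto
      ultimately show "(\<Sum>C\<in>Pow (D - B). F (\<sigma> |` B) * G (\<sigma> |` C) * H (\<sigma> |` (D - B - C))) =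
         F (\<sigma> |` B) * (\<Sum>C\<in>Pow (dom (\<sigma> |` (D - B))). G (\<sigma> |` (D - B) |` C) * H (\<sigma> |` (D - B) |` (dom (\<sigma> |` (D - B)) - C)))"
        by (auto simp: D_def[symmetric] sum_distrib_left mult.assoc intro!: sum.cong)
    qed
    finally show ?thesis .
  qed
qed

lemma cmul_left_commute: "cmul F (cmul G H) = cmul G (cmul F H)"
  by (metis cmul_assoc cmul_comm)

lemma cmul_add_left: "cmul (F + G) H = cmul F H + cmul G H"
  by (auto simp: cmul_def fun_eq_iff distrib_right sum.distrib)

lemma cmul_add_right: "cmul H (F + G) = cmul H F + cmul H G"
  by (auto simp: cmul_def fun_eq_iff distrib_left sum.distrib)

lemma cmul_sc_left: "cmul (scC c F) G = scC c (cmul F G)"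
  by (auto simp: cmul_def scC_def fun_eq_iff sum_distrib_left mult.assoc)

lemma cmul_sc_right: "cmul G (scC c F) = scC c (cmul G F)"
  by (auto simp: cmul_def scC_def fun_eq_iff sum_distrib_left mult.assoc mult.left_commute)

lemma cder_add: "cder (F + G) = cder F + cder G"
  by (auto simp: cder_def fun_eq_iff sum.distrib[symmetric] intro!: sum.cong)

lemma cder_sc: "cder (scC c F) = scC c (cder F)"
  by (auto simp: cder_def scC_def fun_eq_iff sum_distrib_left intro!: sum.cong)

lemma cder_cmul: "cder (cmul F G) = cmul (cder F) G + cmul F (cder G)"
proof (rule ext)
  fix \<sigma> :: sg
  define D where "D = dom \<sigma>"
  define T where "T i A = (if \<sigma> i = Some 0 then 0 else
     F (\<sigma>(i \<mapsto> the (\<sigma> i) - 1) |` A) * G (\<sigma>(i \<mapsto> the (\<sigma> i) - 1) |` (D - A)))" for i A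
  have "cder (cmul F G) \<sigma> = (\<Sum>i\<in>D. \<Sum>A\<in>Pow D. T i A)"
    unfolding cder_def D_def[symmetric]
  proof (rule sum.cong[OF refl])
    fix i assume i: "i \<in> D"
    then have dd: "dom (\<sigma>(i \<mapsto> v)) = D" for v unfolding D_def by auto
    show "(if \<sigma> i = Some 0 then 0 else cmul F G (\<sigma>(i \<mapsto> the (\<sigma> i) - 1))) = (\<Sum>A\<in>Pow D. T i A)"
      unfolding T_def cmul_def dd by auto
  qed
  also have "\<dots> = (\<Sum>A\<in>Pow D. \<Sum>i\<in>D. T i A)" by (rule sum.swap)
  also have "\<dots> = (cmul (cder F) G + cmul F (cder G)) \<sigma>"
  proof (cases "finite D")
    case False
    then show ?thesis by (simp add: cmul_inf D_def)
  next
    case fin: True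
    show ?thesis
      unfolding plus_fun_apply cmul_def D_def[symmetric] sum.distrib[symmetric]
    proof (rule sum.cong[OF refl])
      fix A assume A: "A \<in> Pow D"
      then have AD: "A \<subseteq> D" by auto
      have s1: "(\<Sum>i\<in>A. T i A) = cder F (\<sigma> |` A) * G (\<sigma> |` (D - A))"
        unfolding cder_def sum_distrib_right
      proof -
        have "dom (\<sigma> |` A) = A" using AD by (auto simp: D_def)
        then show "(\<Sum>i\<in>A. T i A) = (\<Sum>i\<in>dom (\<sigma> |` A). (if (\<sigma> |` A) i = Some 0 then 0
          else F ((\<sigma> |` A)(i \<mapsto> the ((\<sigma> |` A) i) - 1))) * G (\<sigma> |` (D - A)))"
          by (auto simp: T_def upd_restrict_in upd_restrict_out intro!: sum.cong)
      qed
      have s2: "(\<Sum>i\<in>D - A. T i A) = F (\<sigma> |` A) * cder G (\<sigma> |` (D - A))"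
        unfolding cder_def sum_distrib_left
      proof -
        have "dom (\<sigma> |` (D - A)) = D - A" by (auto simp: D_def)
        then show "(\<Sum>i\<in>D - A. T i A) = (\<Sum>i\<in>dom (\<sigma> |` (D - A)). F (\<sigma> |` A) * (if (\<sigma> |` (D - A)) i = Some 0 then 0
          else G ((\<sigma> |` (D - A))(i \<mapsto> the ((\<sigma> |` (D - A)) i) - 1))))"
          by (auto simp: T_def upd_restrict_in upd_restrict_out intro!: sum.cong)
      qed
      have "(\<Sum>i\<in>D. T i A) = (\<Sum>i\<in>A. T i A) + (\<Sum>i\<in>D - A. T i A)"
        using fin AD by (metis sum.subset_diff add.commute)
      then show "(\<Sum>i\<in>D. T i A) = cder F (\<sigma> |` A) * G (\<sigma> |` (D - A)) +
          F (\<sigma> |` A) * cder G (\<sigma> |` (D - A))"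
        using s1 s2 by simp
    qed
  qed
  finally show "cder (cmul F G) \<sigma> = (cmul (cder F) G + cmul F (cder G)) \<sigma>" .
qed




fun gdC :: "gdop \<Rightarrow> (sg \<Rightarrow> 'k::comm_ring_1) \<Rightarrow> (sg \<Rightarrow> 'k) \<Rightarrow> sg \<Rightarrow> 'k" where
  "gdC GStar F G = cmul F G"
| "gdC Star F G = cmul (cder F) G"

lemma module_scC: "module (scC :: 'k::comm_ring_1 \<Rightarrow> _)"
  by unfold_locales (auto simp: scC_def fun_eq_iff algebra_simps)

lemma bilin_gdC: "bilin scC (gdC g :: (sg \<Rightarrow> 'k::field) \<Rightarrow> _)"
  by (cases g) (auto simp: bilin_def cmul_add_left cmul_add_right cmul_sc_left cmul_sc_right cder_add cder_sc)

lemma lsum_superset: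
  assumes ms: "module sc" and "finite T" "{t. p t \<noteq> 0} \<subseteq> T"
  shows "lsum sc h p = (\<Sum>t\<in>T. sc (p t) (h t))"
proof -
  interpret module sc by (rule ms)
  show ?thesis unfolding lsum_def by (rule sum.mono_neutral_left) (use assms in auto)
qed

lemma lsum_add:
  assumes ms: "module sc" and fp: "finite {t. p t \<noteq> 0}" and fq: "finite {t. q t \<noteq> 0}"
  shows "lsum sc h (\<lambda>x. p x + q x) = lsum sc h p + lsum sc h q"
proof -
  interpret module sc by (rule ms)
  let ?T = "{t. p t \<noteq> 0} \<union> {t. q t \<noteq> 0}"
  have "lsum sc h (\<lambda>x. p x + q x) = (\<Sum>t\<in>?T. sc (p t + q t) (h t))"
    by (rule lsum_superset[OF ms]) (use fp fq in auto)
  also have "\<dots> = (\<Sum>t\<in>?T. sc (p t) (h t)) + (\<Sum>t\<in>?T. sc (q t) (h t))"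
    by (simp add: scale_left_distrib sum.distrib)
  also have "\<dots> = lsum sc h p + lsum sc h q"
    using lsum_superset[OF ms, of ?T p h] lsum_superset[OF ms, of ?T q h] fp fq by auto
  finally show ?thesis .
qed

lemma lsum_scale:
  assumes ms: "module sc" and fp: "finite {t. p t \<noteq> 0}"
  shows "lsum sc h (\<lambda>x. c * p x) = sc c (lsum sc h p)"
proof -
  interpret module sc by (rule ms)
  have "lsum sc h (\<lambda>x. c * p x) = (\<Sum>t\<in>{t. p t \<noteq> 0}. sc (c * p t) (h t))"
    by (rule lsum_superset[OF ms]) (use fp in auto)
  also have "\<dots> = sc c (lsum sc h p)"
    by (simp add: lsum_def scale_sum_right)
  finally show ?thesis .
qed

lemma lsum_zero: "lsum sc h (\<lambda>_. 0) = 0"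
  by (simp add: lsum_def)

lemma lin_Cons: "lin ((c, t) # l) = (\<lambda>s. (if s = t then c else 0) + lin l s)"
  by (auto simp: lin_def fun_eq_iff)

lemma lin_Nil: "lin [] = (\<lambda>_. 0)"
  by (simp add: lin_def fun_eq_iff)

lemma lin_fin: "finite {t. lin l t \<noteq> 0}"
proof -
  have "{t. lin l t \<noteq> 0} \<subseteq> snd ` set l"
  proof
    fix t assume "t \<in> {t. lin l t \<noteq> 0}"
    then have "filter (\<lambda>(c, s). s = t) l \<noteq> []" by (auto simp: lin_def)
    then obtain x where "x \<in> set l" "snd x = t" by (auto simp: filter_empty_conv)
    then show "t \<in> snd ` set l" by auto
  qed
  then show ?thesis by (rule finite_subset) simp
qed

lemma lsum_lin:
  assumes ms: "module sc"
  shows "lsum sc h (lin l) = sum_list (map (\<lambda>(c, t). sc c (h t)) l)"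
proof (induction l)
  case Nil
  then show ?case by (simp add: lin_Nil lsum_zero)
next
  case (Cons a l)
  interpret module sc by (rule ms)
  obtain c t where a: "a = (c, t)" by force
  have f1: "finite {s. (if s = t then c else 0) \<noteq> 0}"
    by (rule finite_subset[of _ "{t}"]) auto
  have "lsum sc h (\<lambda>s. (if s = t then c else 0)) = (\<Sum>s\<in>{t}. sc (if s = t then c else 0) (h s))"
    by (rule lsum_superset[OF ms]) auto
  then have "lsum sc h (\<lambda>s. (if s = t then c else 0)) = sc c (h t)" by simp
  then show ?case unfolding a lin_Cons
    using lsum_add[OF ms f1 lin_fin, of h l] Cons.IH by simp
qed

lemma scC_one: "scC 1 F = F" by (simp add: scC_def)
lemma scC_mone: "scC (-1) F = - F" by (auto simp: scC_def fun_eq_iff)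

lemma gd_rels_zero:
  assumes "p \<in> (gd_rels :: (gdop btree \<Rightarrow> 'k::field) set)"
  shows "evalp scC gdC b p = (0 :: sg \<Rightarrow> 'k)"
  using assms unfolding gd_rels_def evalp_lsum
  by (auto simp: lsum_lin[OF module_scC] scC_one scC_mone cder_cmul cmul_add_left cmul_add_right
      cmul_assoc cmul_comm cmul_left_commute algebra_simps)

lemma gd_consq_zero:
  assumes "r \<in> consq (gd_rels :: (gdop btree \<Rightarrow> 'k::field) set)"
  shows "evalp scC gdC b r = (0 :: sg \<Rightarrow> 'k)"
proof -
  from assms obtain p w c h where r: "r = pmap (\<lambda>s. subst (\<lambda>i. if i = h then subst w s else Leaf i) c) p"
    and p: "p \<in> gd_rels" and h: "length (filter (\<lambda>i. i = h) (leaves c)) = 1"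
    unfolding consq_def by blast
  have fin: "finite {s. p s \<noteq> 0}" using p unfolding gd_rels_def by (auto simp: lin_fin)
  show ?thesis unfolding r
    by (rule consq_zero[OF module_scC bilin_gdC fin gd_rels_zero[OF p] h])
qed




definition ordv :: "sg \<Rightarrow> nat \<Rightarrow> nat" where
  "ordv \<sigma> i = (case \<sigma> i of Some k \<Rightarrow> k | None \<Rightarrow> 0)"

definition asg :: "('a \<Rightarrow> 'a) \<Rightarrow> (nat \<Rightarrow> 'a) \<Rightarrow> sg \<Rightarrow> nat \<Rightarrow> 'a" where
  "asg d a \<sigma> = (\<lambda>i. (d ^^ ordv \<sigma> i) (a i))"

definition Sg :: "nat \<Rightarrow> nat \<Rightarrow> sg set" where
  "Sg N B = {\<sigma>. dom \<sigma> \<subseteq> {..<N} \<and> ran \<sigma> \<subseteq> {..B}}"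

definition Xg :: "nat \<Rightarrow> sg \<Rightarrow> 'k::comm_ring_1" where
  "Xg i = (\<lambda>\<sigma>. if \<sigma> = [i \<mapsto> 0] then 1 else 0)"

definition ev :: "gdop btree \<Rightarrow> sg \<Rightarrow> 'k::comm_ring_1" where
  "ev v = eval gdC Xg v"

fun nn :: "'o btree \<Rightarrow> nat" where
  "nn (Leaf i) = 0"
| "nn (Node g l r) = nn l + nn r + 1"

lemma finite_Sg: "finite (Sg N B)"
proof -
  have "Sg N B \<subseteq> (\<Union>D\<in>Pow {..<N}. {\<sigma>. dom \<sigma> = D \<and> ran \<sigma> \<subseteq> {..B}})"
    unfolding Sg_def by auto
  moreover have "finite (\<Union>D\<in>Pow {..<N}. {\<sigma>::sg. dom \<sigma> = D \<and> ran \<sigma> \<subseteq> {..B}})"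
    by (intro finite_UN_I) (auto intro: finite_set_of_finite_maps finite_subset)
  ultimately show ?thesis by (rule finite_subset)
qed

lemma sum_nonzero_ex: "sum f A \<noteq> 0 \<Longrightarrow> \<exists>x\<in>A. f x \<noteq> 0"
  by (meson sum.neutral)

lemma cmul_supp:
  assumes "cmul F G \<sigma> \<noteq> 0"
  shows "\<exists>A. A \<subseteq> dom \<sigma> \<and> F (\<sigma> |` A) \<noteq> 0 \<and> G (\<sigma> |` (dom \<sigma> - A)) \<noteq> 0"
  using sum_nonzero_ex[OF assms[unfolded cmul_def]] by auto

lemma cder_supp:
  assumes "cder F \<sigma> \<noteq> 0"
  shows "\<exists>i k. \<sigma> i = Some (Suc k) \<and> F (\<sigma>(i \<mapsto> k)) \<noteq> 0"
proof -
  obtain i where i: "i \<in> dom \<sigma>" and nz: "(if \<sigma> i = Some 0 then 0 else F (\<sigma>(i \<mapsto> the (\<sigma> i) - 1))) \<noteq> 0"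
    using sum_nonzero_ex[OF assms[unfolded cder_def]] by blast
  then obtain j where j: "\<sigma> i = Some j" by auto
  with nz have "j \<noteq> 0" "F (\<sigma>(i \<mapsto> j - 1)) \<noteq> 0" by (auto split: if_splits)
  then have "\<sigma> i = Some (Suc (j - 1))" using j by simp
  then show ?thesis using \<open>F (\<sigma>(i \<mapsto> j - 1)) \<noteq> 0\<close> by blast
qed

lemma cder_supp_dom:
  assumes "\<And>\<sigma>. F \<sigma> \<noteq> 0 \<Longrightarrow> dom \<sigma> = L" "cder F \<sigma> \<noteq> 0"
  shows "dom \<sigma> = L"
proof -
  obtain i k where "\<sigma> i = Some (Suc k)" "F (\<sigma>(i \<mapsto> k)) \<noteq> 0" using cder_supp[OF assms(2)] by blast
  then have 1: "dom (\<sigma>(i \<mapsto> k)) = L" and 2: "i \<in> dom \<sigma>" using assms(1) by blast+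
  have "dom (\<sigma>(i \<mapsto> k)) = insert i (dom \<sigma>)" by simp
  then show ?thesis using 1 2 by (simp add: insert_absorb)
qed

lemma ev_Leaf_supp: "ev (Leaf i) \<sigma> \<noteq> 0 \<Longrightarrow> dom \<sigma> = set (leaves (Leaf i :: gdop btree)) \<and> ran \<sigma> \<subseteq> {..nn (Leaf i :: gdop btree)}"
proof -
  assume "ev (Leaf i) \<sigma> \<noteq> 0"
  then have "\<sigma> = [i \<mapsto> 0]" by (auto simp: ev_def Xg_def split: if_splits)
  then show ?thesis by simp
qed

lemma ev_supp: "(ev v \<sigma> :: 'k::comm_ring_1) \<noteq> 0 \<Longrightarrow> dom \<sigma> = set (leaves v) \<and> ran \<sigma> \<subseteq> {..nn v}"
proof (induction v arbitrary: \<sigma>)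
  case (Leaf i)
  then show ?case by (rule ev_Leaf_supp)
next
  case (Node g l r)
  show ?case
  proof (cases g)
    case GStar
    then have "(cmul (ev l) (ev r) \<sigma> :: 'k) \<noteq> 0" using Node.prems by (simp add: ev_def)
    then obtain A where A: "A \<subseteq> dom \<sigma>" "(ev l (\<sigma> |` A) :: 'k) \<noteq> 0" "(ev r (\<sigma> |` (dom \<sigma> - A)) :: 'k) \<noteq> 0"
      using cmul_supp by blast
    have dA: "dom (\<sigma> |` A) = A" "dom (\<sigma> |` (dom \<sigma> - A)) = dom \<sigma> - A" using A(1) by auto
    have h1: "A = set (leaves l)" "dom \<sigma> - A = set (leaves r)"
      using Node.IH(1)[OF A(2)] Node.IH(2)[OF A(3)] dA by simp_all
    have h2: "ran (\<sigma> |` A) \<subseteq> {..nn l}" "ran (\<sigma> |` (dom \<sigma> - A)) \<subseteq> {..nn r}"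
      using Node.IH(1)[OF A(2)] Node.IH(2)[OF A(3)] by simp_all
    have "dom \<sigma> = set (leaves (Node g l r))" using h1 A(1) by auto
    moreover have "ran \<sigma> \<subseteq> {..nn (Node g l r)}"
    proof
      fix y assume "y \<in> ran \<sigma>"
      then obtain x where x: "\<sigma> x = Some y" by (auto simp: ran_def)
      show "y \<in> {..nn (Node g l r)}"
      proof (cases "x \<in> A")
        case True
        then have "y \<in> ran (\<sigma> |` A)" using x unfolding ran_def by (intro CollectI exI[of _ x]) simp
        then show ?thesis using h2 by auto
      next
        case False
        then have "x \<in> dom \<sigma> - A" using x by blast
        then have "y \<in> ran (\<sigma> |` (dom \<sigma> - A))" using x unfolding ran_def by (intro CollectI exI[of _ x]) simp
        then show ?thesis using h2 by auto
      qed
    qed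
    ultimately show ?thesis by blast
  next
    case Star
    then have "(cmul (cder (ev l)) (ev r) \<sigma> :: 'k) \<noteq> 0" using Node.prems by (simp add: ev_def)
    then obtain A where A: "A \<subseteq> dom \<sigma>" "(cder (ev l) (\<sigma> |` A) :: 'k) \<noteq> 0" "(ev r (\<sigma> |` (dom \<sigma> - A)) :: 'k) \<noteq> 0"
      using cmul_supp by blast
    obtain i k where ik: "(\<sigma> |` A) i = Some (Suc k)" "(ev l ((\<sigma> |` A)(i \<mapsto> k)) :: 'k) \<noteq> 0"
      using cder_supp[OF A(2)] by blast
    have iA: "i \<in> A" using ik(1) by (auto simp: restrict_map_def split: if_splits)
    have dA: "dom ((\<sigma> |` A)(i \<mapsto> k)) = A" "dom (\<sigma> |` (dom \<sigma> - A)) = dom \<sigma> - A" using A(1) iA by auto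
    have e1: "dom ((\<sigma> |` A)(i \<mapsto> k)) = set (leaves l)" "ran ((\<sigma> |` A)(i \<mapsto> k)) \<subseteq> {..nn l}"
      using Node.IH(1)[OF ik(2)] by blast+
    have e2: "dom (\<sigma> |` (dom \<sigma> - A)) = set (leaves r)" "ran (\<sigma> |` (dom \<sigma> - A)) \<subseteq> {..nn r}"
      using Node.IH(2)[OF A(3)] by blast+
    have h1: "A = set (leaves l)" "dom \<sigma> - A = set (leaves r)"
      using e1(1) e2(1) dA by metis+
    have h2: "ran ((\<sigma> |` A)(i \<mapsto> k)) \<subseteq> {..nn l}" "ran (\<sigma> |` (dom \<sigma> - A)) \<subseteq> {..nn r}"
      using e1(2) e2(2) by blast+
    have "dom \<sigma> = set (leaves (Node g l r))" using h1 A(1) by auto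
    moreover have "ran \<sigma> \<subseteq> {..nn (Node g l r)}"
    proof
      fix y assume "y \<in> ran \<sigma>"
      then obtain x where x: "\<sigma> x = Some y" by (auto simp: ran_def)
      show "y \<in> {..nn (Node g l r)}"
      proof (cases "x \<in> A")
        case True
        show ?thesis
        proof (cases "x = i")
          case True
          then have "y = Suc k" using ik(1) x iA by auto
          moreover have "k \<in> ran ((\<sigma> |` A)(i \<mapsto> k))" by (auto simp: ran_def)
          ultimately show ?thesis using h2 by auto
        next
          case False
          then have "y \<in> ran ((\<sigma> |` A)(i \<mapsto> k))" using x \<open>x \<in> A\<close> by (auto simp: ran_def intro!: exI[of _ x])
          then show ?thesis using h2 by auto
        qed
      next
        case False
        then have "x \<in> dom \<sigma> - A" using x by blast
        then have "y \<in> ran (\<sigma> |` (dom \<sigma> - A))" using x unfolding ran_def by (intro CollectI exI[of _ x]) simp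
        then show ?thesis using h2 by auto
      qed
    qed
    ultimately show ?thesis by blast
  qed
qed




definition Ev :: "('a \<Rightarrow> 'a \<Rightarrow> 'a) \<Rightarrow> ('a \<Rightarrow> 'a) \<Rightarrow> (nat \<Rightarrow> 'a) \<Rightarrow> unit btree \<Rightarrow> sg \<Rightarrow> 'a" where
  "Ev m d a u \<sigma> = eval (\<lambda>_. m) (asg d a \<sigma>) u"

definition Lu :: "('k::field \<Rightarrow> 'a::ab_group_add \<Rightarrow> 'a) \<Rightarrow> ('a \<Rightarrow> 'a \<Rightarrow> 'a) \<Rightarrow> ('a \<Rightarrow> 'a) \<Rightarrow> (nat \<Rightarrow> 'a)
   \<Rightarrow> nat \<Rightarrow> nat \<Rightarrow> unit btree \<Rightarrow> (sg \<Rightarrow> 'k) \<Rightarrow> 'a" where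
  "Lu sc m d a N B u F = (\<Sum>\<sigma>\<in>Sg N B. sc (F \<sigma>) (Ev m d a u \<sigma>))"

lemma restr_add1: "dom s1 \<inter> dom s2 = {} \<Longrightarrow> (s1 ++ s2) |` dom s1 = s1"
  by (auto simp: fun_eq_iff restrict_map_def map_add_def split: option.splits)

lemma restr_add2: "(s1 ++ s2) |` dom s2 = s2"
  by (auto simp: fun_eq_iff restrict_map_def map_add_def split: option.splits)

lemma add_restr: "dom s = L \<union> R \<Longrightarrow> (s |` L) ++ (s |` R) = s"
  by (auto simp: fun_eq_iff restrict_map_def map_add_def split: option.splits)

lemma ran_restr_sub: "ran (s |` A) \<subseteq> ran s"
  by (auto simp: ran_def restrict_map_def split: if_splits)

lemma ran_add_sub: "ran (s1 ++ s2) \<subseteq> ran s1 \<union> ran s2"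
  by (auto simp: ran_def map_add_def split: option.splits)

lemma var_leaves: "leaves (var_part t) = leaves t"
  by (induction t) auto

lemma gd_leaves: "set (leaves (gd_part t)) = set (leaves t)"
  by (induction t rule: gd_part.induct) auto

lemma gd_nn: "nn (gd_part t) = nn t"
  by (induction t rule: gd_part.induct) auto

context
  fixes sc :: "'k::field \<Rightarrow> 'a::ab_group_add \<Rightarrow> 'a" and m :: "'a \<Rightarrow> 'a \<Rightarrow> 'a"
    and d :: "'a \<Rightarrow> 'a" and a :: "nat \<Rightarrow> 'a" and N B :: nat
  assumes alg: "is_algebra sc m" and der: "is_derivation sc m d"
begin

lemma ms: "module sc"
  using alg unfolding is_algebra_def by (simp add: module_iff_vector_space)

lemma bm: "bilin sc m"
  using alg unfolding is_algebra_def bilin_def by blast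

lemma m_add1: "m (x + y) z = m x z + m y z" using bm unfolding bilin_def by blast
lemma m_add2: "m x (y + z) = m x y + m x z" using bm unfolding bilin_def by blast
lemma m_sc1: "m (sc c x) y = sc c (m x y)" using bm unfolding bilin_def by blast
lemma m_sc2: "m x (sc c y) = sc c (m x y)" using bm unfolding bilin_def by blast
lemma m_zero1: "m 0 y = 0" using bilin_zero[OF bm] by blast
lemma m_zero2: "m y 0 = 0" using bilin_zero[OF bm] by blast

lemma m_sum1: "m (\<Sum>x\<in>X. f x) y = (\<Sum>x\<in>X. m (f x) y)"
  by (induction X rule: infinite_finite_induct) (simp_all add: m_zero1 m_add1)

lemma m_sum2: "m y (\<Sum>x\<in>X. f x) = (\<Sum>x\<in>X. m y (f x))"
  by (induction X rule: infinite_finite_induct) (simp_all add: m_zero2 m_add2)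

lemma d_add: "d (x + y) = d x + d y" using der unfolding is_derivation_def by blast
lemma d_sc: "d (sc c x) = sc c (d x)" using der unfolding is_derivation_def by blast
lemma d_m: "d (m x y) = m (d x) y + m x (d y)" using der unfolding is_derivation_def by blast
lemma d_zero: "d 0 = 0"
proof -
  have "d (0 + 0) = d 0 + d 0" by (rule d_add)
  then show ?thesis by simp
qed

lemma d_sum: "d (\<Sum>x\<in>X. f x) = (\<Sum>x\<in>X. d (f x))"
  by (induction X rule: infinite_finite_induct) (simp_all add: d_zero d_add)

lemma eval_der:
  "distinct (leaves u) \<Longrightarrow>
   d (eval (\<lambda>_. m) b u) = (\<Sum>i\<in>set (leaves u). eval (\<lambda>_. m) (b(i := d (b i))) u)"
proof (induction u)
  case (Leaf x)
  then show ?case by simp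
next
  case (Node g l r)
  have dl: "distinct (leaves l)" and dr: "distinct (leaves r)"
    and disj: "set (leaves l) \<inter> set (leaves r) = {}" using Node.prems by auto
  have el: "eval (\<lambda>_. m) (b(i := y)) r = eval (\<lambda>_. m) b r" if "i \<in> set (leaves l)" for i y
    using that disj by (intro eval_upd_notin) auto
  have er: "eval (\<lambda>_. m) (b(i := y)) l = eval (\<lambda>_. m) b l" if "i \<in> set (leaves r)" for i y
    using that disj by (intro eval_upd_notin) auto
  have "d (eval (\<lambda>_. m) b (Node g l r)) = m (d (eval (\<lambda>_. m) b l)) (eval (\<lambda>_. m) b r) + m (eval (\<lambda>_. m) b l) (d (eval (\<lambda>_. m) b r))"
    by (simp add: d_m)
  also have "\<dots> = (\<Sum>i\<in>set (leaves l). eval (\<lambda>_. m) (b(i := d (b i))) (Node g l r)) +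
      (\<Sum>i\<in>set (leaves r). eval (\<lambda>_. m) (b(i := d (b i))) (Node g l r))"
    unfolding Node.IH(1)[OF dl] Node.IH(2)[OF dr] m_sum1 m_sum2
    by (simp only: eval.simps el er cong: sum.cong)
  also have "\<dots> = (\<Sum>i\<in>set (leaves (Node g l r)). eval (\<lambda>_. m) (b(i := d (b i))) (Node g l r))"
    using disj by (simp add: sum.union_disjoint)
  finally show ?case .
qed

abbreviation "L \<equiv> Lu sc m d a N B"
abbreviation "E \<equiv> Ev m d a"

lemma split_lemma:
  fixes F G :: "sg \<Rightarrow> 'k"
  assumes FL: "\<And>\<sigma>. F \<sigma> \<noteq> 0 \<Longrightarrow> dom \<sigma> = set (leaves ul)"
    and GR: "\<And>\<sigma>. G \<sigma> \<noteq> 0 \<Longrightarrow> dom \<sigma> = set (leaves ur)"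
    and disj: "set (leaves ul) \<inter> set (leaves ur) = {}"
  shows "L (Node () ul ur) (cmul F G) = m (L ul F) (L ur G)"
proof -
  interpret module sc by (rule ms)
  define Lf where "Lf = set (leaves ul)"
  define Rt where "Rt = set (leaves ur)"
  let ?S = "Sg N B"
  let ?S' = "{\<sigma>\<in>?S. dom \<sigma> = Lf \<union> Rt}"
  let ?Q = "{p\<in>?S \<times> ?S. dom (fst p) = Lf \<and> dom (snd p) = Rt}"
  define h where "h p = sc (F (fst p) * G (snd p)) (m (E ul (fst p)) (E ur (snd p)))" for p
  have finS: "finite ?S" by (rule finite_Sg)
  have "m (L ul F) (L ur G) = (\<Sum>s1\<in>?S. \<Sum>s2\<in>?S. h (s1, s2))"
    unfolding Lu_def m_sum1 m_sum2 h_def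
    by (simp add: m_sc1 m_sc2 mult.commute) (rule sum.swap)
  also have "\<dots> = (\<Sum>p\<in>?S \<times> ?S. h p)"
    by (simp add: sum.cartesian_product)
  also have "\<dots> = (\<Sum>p\<in>?Q. h p)"
  proof (rule sum.mono_neutral_right)
    show "finite (?S \<times> ?S)" using finS by simp
    show "?Q \<subseteq> ?S \<times> ?S" by auto
    show "\<forall>p\<in>?S \<times> ?S - ?Q. h p = 0"
    proof
      fix p assume "p \<in> ?S \<times> ?S - ?Q"
      then have p1: "p \<in> ?S \<times> ?S" and p2: "\<not> (dom (fst p) = Lf \<and> dom (snd p) = Rt)" by blast+
      have "\<not> (F (fst p) \<noteq> 0 \<and> G (snd p) \<noteq> 0)"
      proof
        assume "F (fst p) \<noteq> 0 \<and> G (snd p) \<noteq> 0"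
        then have "dom (fst p) = Lf" "dom (snd p) = Rt" using FL GR unfolding Lf_def Rt_def by blast+
        then show False using p2 by blast
      qed
      then have "F (fst p) = 0 \<or> G (snd p) = 0" by blast
      then show "h p = 0" unfolding h_def by auto
    qed
  qed
  also have "\<dots> = (\<Sum>\<sigma>\<in>?S'. h (\<sigma> |` Lf, \<sigma> |` Rt))"
  proof (rule sum.reindex_bij_witness[where i="\<lambda>\<sigma>. (\<sigma> |` Lf, \<sigma> |` Rt)" and j="\<lambda>p. fst p ++ snd p"])
    fix p assume p: "p \<in> ?Q"
    then have dj: "dom (fst p) \<inter> dom (snd p) = {}" using disj unfolding Lf_def Rt_def by auto
    show eqp: "((fst p ++ snd p) |` Lf, (fst p ++ snd p) |` Rt) = p"
      using restr_add1[OF dj] restr_add2[of "fst p" "snd p"] p by (cases p) auto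
    then show "h ((fst p ++ snd p) |` Lf, (fst p ++ snd p) |` Rt) = h p" by simp
    have fs: "fst p \<in> ?S" "snd p \<in> ?S" using p by (auto simp: mem_Times_iff)
    have "ran (fst p) \<subseteq> {..B}" "ran (snd p) \<subseteq> {..B}" using fs unfolding Sg_def mem_Collect_eq by blast+
    then have "ran (fst p ++ snd p) \<subseteq> {..B}" using ran_add_sub[of "fst p" "snd p"] by blast
    moreover have "dom (fst p) \<subseteq> {..<N}" "dom (snd p) \<subseteq> {..<N}" using fs unfolding Sg_def mem_Collect_eq by blast+
    moreover have "dom (fst p) = Lf" "dom (snd p) = Rt" using p by blast+
    ultimately show "fst p ++ snd p \<in> ?S'" unfolding Sg_def by (simp add: Un_commute)
  next
    fix \<sigma> assume s: "\<sigma> \<in> ?S'"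
    show "fst (\<sigma> |` Lf, \<sigma> |` Rt) ++ snd (\<sigma> |` Lf, \<sigma> |` Rt) = \<sigma>" using s by (simp add: add_restr)
    have sS: "ran \<sigma> \<subseteq> {..B}" "dom \<sigma> \<subseteq> {..<N}" "dom \<sigma> = Lf \<union> Rt"
      using s unfolding Sg_def mem_Collect_eq by blast+
    have "ran (\<sigma> |` Lf) \<subseteq> {..B}" "ran (\<sigma> |` Rt) \<subseteq> {..B}"
      using ran_restr_sub[of \<sigma>] sS(1) by blast+
    moreover have "dom (\<sigma> |` Lf) = Lf" "dom (\<sigma> |` Rt) = Rt" using sS(3) by auto
    ultimately show "(\<sigma> |` Lf, \<sigma> |` Rt) \<in> ?Q" using sS(2,3) unfolding Sg_def by auto
  qed
  also have "\<dots> = (\<Sum>\<sigma>\<in>?S'. sc (cmul F G \<sigma>) (E (Node () ul ur) \<sigma>))"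
  proof (rule sum.cong[OF refl])
    fix \<sigma> assume s: "\<sigma> \<in> ?S'"
    then have D: "dom \<sigma> = Lf \<union> Rt" by simp
    have c: "cmul F G \<sigma> = F (\<sigma> |` Lf) * G (\<sigma> |` Rt)"
    proof -
      have "cmul F G \<sigma> = (\<Sum>A\<in>Pow (dom \<sigma>). F (\<sigma> |` A) * G (\<sigma> |` (dom \<sigma> - A)))"
        by (simp add: cmul_def)
      also have "\<dots> = (\<Sum>A\<in>{Lf}. F (\<sigma> |` A) * G (\<sigma> |` (dom \<sigma> - A)))"
      proof (rule sum.mono_neutral_right)
        show "finite (Pow (dom \<sigma>))" using D by (simp add: Lf_def Rt_def)
        show "{Lf} \<subseteq> Pow (dom \<sigma>)" using D by auto
        show "\<forall>A\<in>Pow (dom \<sigma>) - {Lf}. F (\<sigma> |` A) * G (\<sigma> |` (dom \<sigma> - A)) = 0"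
        proof
        fix A assume "A \<in> Pow (dom \<sigma>) - {Lf}"
        then have A: "A \<in> Pow (dom \<sigma>)" "A \<noteq> Lf" by auto
        have "F (\<sigma> |` A) = 0"
        proof (rule ccontr)
          assume "F (\<sigma> |` A) \<noteq> 0"
          then have "dom (\<sigma> |` A) = Lf" using FL unfolding Lf_def by blast
          moreover have "dom (\<sigma> |` A) = A" using A(1) by auto
          ultimately show False using A(2) by simp
        qed
        then show "F (\<sigma> |` A) * G (\<sigma> |` (dom \<sigma> - A)) = 0" by simp
        qed
      qed
      also have "\<dots> = F (\<sigma> |` Lf) * G (\<sigma> |` (dom \<sigma> - Lf))" by simp
      also have "dom \<sigma> - Lf = Rt" using D disj unfolding Lf_def Rt_def by auto
      finally show ?thesis .
    qed
    have e1: "E ul (\<sigma> |` Lf) = E ul \<sigma>"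
      unfolding Ev_def by (rule eval_cong_leaves) (auto simp: asg_def ordv_def Lf_def)
    have e2: "E ur (\<sigma> |` Rt) = E ur \<sigma>"
      unfolding Ev_def by (rule eval_cong_leaves) (auto simp: asg_def ordv_def Rt_def)
    show "h (\<sigma> |` Lf, \<sigma> |` Rt) = sc (cmul F G \<sigma>) (E (Node () ul ur) \<sigma>)"
      unfolding h_def c using e1 e2 by (simp add: Ev_def)
  qed
  also have "\<dots> = L (Node () ul ur) (cmul F G)"
    unfolding Lu_def
  proof (rule sum.mono_neutral_left)
    show "finite ?S" by (rule finS)
    show "?S' \<subseteq> ?S" by auto
    show "\<forall>\<sigma>\<in>?S - ?S'. sc (cmul F G \<sigma>) (E (Node () ul ur) \<sigma>) = 0"
    proof
      fix \<sigma> assume s: "\<sigma> \<in> ?S - ?S'"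
      have "cmul F G \<sigma> = 0"
      proof (rule ccontr)
        assume "cmul F G \<sigma> \<noteq> 0"
        then obtain A where A: "A \<subseteq> dom \<sigma>" "F (\<sigma> |` A) \<noteq> 0" "G (\<sigma> |` (dom \<sigma> - A)) \<noteq> 0"
          using cmul_supp by blast
        have "dom (\<sigma> |` A) = Lf" using FL[OF A(2)] unfolding Lf_def .
        moreover have "dom (\<sigma> |` (dom \<sigma> - A)) = Rt" using GR[OF A(3)] unfolding Rt_def .
        ultimately have "dom \<sigma> = Lf \<union> Rt" using A(1) by auto
        then show False using s by auto
      qed
      then show "sc (cmul F G \<sigma>) (E (Node () ul ur) \<sigma>) = 0" by simp
    qed
  qed
  finally show ?thesis ..
qed

lemma ran_upd_sub: "ran (f(x \<mapsto> y)) \<subseteq> insert y (ran f)"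
  by (auto simp: ran_def)

lemma der_lemma:
  fixes F :: "sg \<Rightarrow> 'k"
  assumes dist: "distinct (leaves u)"
    and supp: "\<And>\<sigma>. F \<sigma> \<noteq> 0 \<Longrightarrow> dom \<sigma> = set (leaves u) \<and> ran \<sigma> \<subseteq> {..<B}"
  shows "d (L u F) = L u (cder F)"
proof -
  interpret module sc by (rule ms)
  let ?S = "Sg N B"
  define U where "U = set (leaves u)"
  define up where "up \<sigma> i = \<sigma>(i \<mapsto> Suc (ordv \<sigma> i))" for \<sigma> :: sg and i
  define dn where "dn \<sigma> i = \<sigma>(i \<mapsto> the (\<sigma> i) - 1)" for \<sigma> :: sg and i
  define g1 where "g1 p = sc (F (fst p)) (E u (up (fst p) (snd p)))" for p
  define g2 where "g2 p = (if fst p (snd p) = Some 0 then 0 else sc (F (dn (fst p) (snd p))) (E u (fst p)))" for p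
  let ?P1 = "{p \<in> ?S \<times> U. F (fst p) \<noteq> 0}"
  let ?P2 = "{p \<in> Sigma ?S dom. fst p (snd p) \<noteq> Some 0 \<and> F (dn (fst p) (snd p)) \<noteq> 0}"
  have finS: "finite ?S" by (rule finite_Sg)
  have finU: "finite U" by (simp add: U_def)
  have domS: "\<And>\<sigma>. \<sigma> \<in> ?S \<Longrightarrow> finite (dom \<sigma>)"
    unfolding Sg_def by (auto intro: finite_subset)
  have finSig: "finite (Sigma ?S dom)" using finS domS by (rule finite_SigmaI)
  have asg_up: "(asg d a \<sigma>)(i := d (asg d a \<sigma> i)) = asg d a (up \<sigma> i)" for \<sigma> i
    by (auto simp: fun_eq_iff asg_def up_def ordv_def)
  have "d (L u F) = (\<Sum>\<sigma>\<in>?S. sc (F \<sigma>) (d (E u \<sigma>)))"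
    unfolding Lu_def d_sum d_sc ..
  also have "\<dots> = (\<Sum>\<sigma>\<in>?S. \<Sum>i\<in>U. g1 (\<sigma>, i))"
  proof (rule sum.cong[OF refl])
    fix \<sigma> assume "\<sigma> \<in> ?S"
    show "sc (F \<sigma>) (d (E u \<sigma>)) = (\<Sum>i\<in>U. g1 (\<sigma>, i))"
    proof (cases "F \<sigma> = 0")
      case True
      then show ?thesis by (simp add: g1_def)
    next
      case False
      have "d (E u \<sigma>) = (\<Sum>i\<in>U. E u (up \<sigma> i))"
        unfolding Ev_def eval_der[OF dist] U_def asg_up ..
      then show ?thesis by (simp add: g1_def scale_sum_right)
    qed
  qed
  also have "\<dots> = (\<Sum>p\<in>?S \<times> U. g1 p)"
    by (simp add: sum.cartesian_product)
  also have "\<dots> = (\<Sum>p\<in>?P1. g1 p)"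
    by (rule sum.mono_neutral_right) (use finS finU in \<open>auto simp: g1_def\<close>)
  also have "\<dots> = (\<Sum>p\<in>?P2. g2 p)"
  proof (rule sum.reindex_bij_witness[where i="\<lambda>p. (dn (fst p) (snd p), snd p)" and j="\<lambda>p. (up (fst p) (snd p), snd p)"])
    fix p assume p: "p \<in> ?P1"
    obtain \<sigma> i where pe: "p = (\<sigma>, i)" by force
    have S: "\<sigma> \<in> ?S" and iU: "i \<in> U" and Fn: "F \<sigma> \<noteq> 0" using p pe by auto
    have dU: "dom \<sigma> = U" and rB: "ran \<sigma> \<subseteq> {..<B}" using supp[OF Fn] unfolding U_def by auto
    obtain k where k: "\<sigma> i = Some k" using dU iU by auto
    have kB: "k < B" using rB k by (auto simp: ran_def)
    have upk: "up \<sigma> i = \<sigma>(i \<mapsto> Suc k)" by (simp add: up_def ordv_def k)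
    have dnup: "dn (up \<sigma> i) i = \<sigma>" unfolding upk dn_def by (simp add: k[symmetric])
    show "(dn (fst (up (fst p) (snd p), snd p)) (snd (up (fst p) (snd p), snd p)), snd (up (fst p) (snd p), snd p)) = p"
      using dnup pe by simp
    show "g2 (up (fst p) (snd p), snd p) = g1 p"
      using dnup pe by (simp add: g1_def g2_def upk)
    have "dom (up \<sigma> i) = dom \<sigma>" using k by (auto simp: upk)
    moreover have "ran (up \<sigma> i) \<subseteq> {..B}"
    proof -
      have "insert (Suc k) (ran \<sigma>) \<subseteq> {..B}" using rB kB by auto
      then show ?thesis using ran_upd_sub[of \<sigma> i "Suc k"] unfolding upk by blast
    qed
    ultimately have "up \<sigma> i \<in> ?S" using S unfolding Sg_def by auto
    moreover have "i \<in> dom (up \<sigma> i)" by (simp add: upk)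
    ultimately show "(up (fst p) (snd p), snd p) \<in> ?P2" using pe dnup Fn by (simp add: upk)
  next
    fix q assume q: "q \<in> ?P2"
    obtain \<sigma> i where qe: "q = (\<sigma>, i)" by force
    have S: "\<sigma> \<in> ?S" and iD: "i \<in> dom \<sigma>" and n0: "\<sigma> i \<noteq> Some 0" and Fn: "F (dn \<sigma> i) \<noteq> 0"
      using q qe by auto
    obtain k where k: "\<sigma> i = Some (Suc k)" using iD n0 by (metis domD not0_implies_Suc)
    have dnk: "dn \<sigma> i = \<sigma>(i \<mapsto> k)" by (simp add: dn_def k)
    have updn: "up (dn \<sigma> i) i = \<sigma>" unfolding dnk up_def ordv_def by (simp add: k[symmetric])
    show "(up (fst (dn (fst q) (snd q), snd q)) (snd (dn (fst q) (snd q), snd q)), snd (dn (fst q) (snd q), snd q)) = q"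
      using updn qe by simp
    have dU: "dom (dn \<sigma> i) = U" and rB: "ran (dn \<sigma> i) \<subseteq> {..<B}" using supp[OF Fn] unfolding U_def by auto
    have "dom (dn \<sigma> i) = dom \<sigma>" using iD by (auto simp: dnk)
    then have "dn \<sigma> i \<in> ?S" using S rB unfolding Sg_def by auto
    moreover have "i \<in> U" using dU iD by (auto simp: dnk)
    ultimately show "(dn (fst q) (snd q), snd q) \<in> ?P1" using qe Fn by simp
  qed
  also have "\<dots> = (\<Sum>p\<in>Sigma ?S dom. g2 p)"
    by (rule sum.mono_neutral_left) (use finSig in \<open>auto simp: g2_def\<close>)
  also have "\<dots> = (\<Sum>\<sigma>\<in>?S. \<Sum>i\<in>dom \<sigma>. g2 (\<sigma>, i))"
    by (subst sum.Sigma) (use finS domS in auto)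
  also have "\<dots> = L u (cder F)"
    unfolding Lu_def cder_def scale_sum_left
    by (auto simp: g2_def dn_def intro!: sum.cong)
  finally show ?thesis .
qed

lemma ev_supp_t:
  assumes "(ev (gd_part t) \<sigma> :: 'k) \<noteq> 0" "nn t < B"
  shows "dom \<sigma> = set (leaves (var_part t)) \<and> ran \<sigma> \<subseteq> {..<B}"
  using ev_supp[OF assms(1)] assms(2) by (auto simp: gd_leaves gd_nn var_leaves)

lemma key_lemma:
  "distinct (leaves t) \<Longrightarrow> set (leaves t) \<subseteq> {..<N} \<Longrightarrow> nn t \<le> B \<Longrightarrow>
   L (var_part t) (ev (gd_part t)) = eval (dstar_ops m d) a t"
proof (induction t)
  case (Leaf i)
  interpret module sc by (rule ms)
  have iN: "i < N" using Leaf.prems by auto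
  have mem: "[i \<mapsto> 0] \<in> Sg N B" using iN by (simp add: Sg_def)
  have "L (var_part (Leaf i)) (ev (gd_part (Leaf i))) = (\<Sum>\<sigma>\<in>Sg N B. sc (Xg i \<sigma>) (E (Leaf i) \<sigma>))"
    by (simp add: Lu_def ev_def)
  also have "\<dots> = (\<Sum>\<sigma>\<in>{[i \<mapsto> 0]}. sc (Xg i \<sigma>) (E (Leaf i) \<sigma>))"
    by (rule sum.mono_neutral_right) (use finite_Sg mem in \<open>auto simp: Xg_def\<close>)
  also have "\<dots> = a i" by (simp add: Xg_def Ev_def asg_def ordv_def)
  finally show ?case by simp
next
  case (Node g l r)
  have dl: "distinct (leaves l)" and dr: "distinct (leaves r)"
    and disj: "set (leaves l) \<inter> set (leaves r) = {}" using Node.prems by auto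
  have Nl: "set (leaves l) \<subseteq> {..<N}" and Nr: "set (leaves r) \<subseteq> {..<N}" using Node.prems by auto
  have Bl: "nn l < B" and Br: "nn r < B" using Node.prems by auto
  have IHl: "L (var_part l) (ev (gd_part l)) = eval (dstar_ops m d) a l"
    using Node.IH(1)[OF dl Nl] Bl by simp
  have IHr: "L (var_part r) (ev (gd_part r)) = eval (dstar_ops m d) a r"
    using Node.IH(2)[OF dr Nr] Br by simp
  have sl: "\<And>\<sigma>. (ev (gd_part l) \<sigma> :: 'k) \<noteq> 0 \<Longrightarrow> dom \<sigma> = set (leaves (var_part l)) \<and> ran \<sigma> \<subseteq> {..<B}"
    by (rule ev_supp_t[OF _ Bl])
  have sr: "\<And>\<sigma>. (ev (gd_part r) \<sigma> :: 'k) \<noteq> 0 \<Longrightarrow> dom \<sigma> = set (leaves (var_part r)) \<and> ran \<sigma> \<subseteq> {..<B}"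
    by (rule ev_supp_t[OF _ Br])
  have sl0: "\<And>\<sigma>. (ev (gd_part l) \<sigma> :: 'k) \<noteq> 0 \<Longrightarrow> dom \<sigma> = set (leaves (var_part l))"
    using sl by blast
  have sr0: "\<And>\<sigma>. (ev (gd_part r) \<sigma> :: 'k) \<noteq> 0 \<Longrightarrow> dom \<sigma> = set (leaves (var_part r))"
    using sr by blast
  have sl': "\<And>\<sigma>. (cder (ev (gd_part l)) \<sigma> :: 'k) \<noteq> 0 \<Longrightarrow> dom \<sigma> = set (leaves (var_part l))"
    by (rule cder_supp_dom[OF sl0])
  have sr': "\<And>\<sigma>. (cder (ev (gd_part r)) \<sigma> :: 'k) \<noteq> 0 \<Longrightarrow> dom \<sigma> = set (leaves (var_part r))"
    by (rule cder_supp_dom[OF sr0])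
  have disj': "set (leaves (var_part l)) \<inter> set (leaves (var_part r)) = {}"
    using disj by (simp add: var_leaves)
  have dvl: "distinct (leaves (var_part l))" and dvr: "distinct (leaves (var_part r))"
    using dl dr by (simp_all add: var_leaves)
  show ?case
  proof (cases g)
    case Dot
    have "L (var_part (Node g l r)) (ev (gd_part (Node g l r))) =
        L (Node () (var_part l) (var_part r)) (cmul (ev (gd_part l)) (ev (gd_part r)))"
      by (simp add: Dot ev_def)
    also have "\<dots> = m (L (var_part l) (ev (gd_part l))) (L (var_part r) (ev (gd_part r)))"
      by (rule split_lemma[OF sl0 sr0 disj'])
    finally show ?thesis using IHl IHr Dot by simp
  next
    case Succ
    have "L (var_part (Node g l r)) (ev (gd_part (Node g l r))) =
        L (Node () (var_part l) (var_part r)) (cmul (cder (ev (gd_part l))) (ev (gd_part r)))"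
      by (simp add: Succ ev_def)
    also have "\<dots> = m (L (var_part l) (cder (ev (gd_part l)))) (L (var_part r) (ev (gd_part r)))"
      by (rule split_lemma[OF sl' sr0 disj'])
    also have "L (var_part l) (cder (ev (gd_part l))) = d (L (var_part l) (ev (gd_part l)))"
      by (rule der_lemma[OF dvl sl, symmetric])
    finally show ?thesis using IHl IHr Succ by simp
  next
    case Prec
    have "L (var_part (Node g l r)) (ev (gd_part (Node g l r))) =
        L (Node () (var_part l) (var_part r)) (cmul (ev (gd_part l)) (cder (ev (gd_part r))))"
      by (simp add: Prec ev_def cmul_comm)
    also have "\<dots> = m (L (var_part l) (ev (gd_part l))) (L (var_part r) (cder (ev (gd_part r))))"
      by (rule split_lemma[OF sl0 sr' disj'])
    also have "L (var_part r) (cder (ev (gd_part r))) = d (L (var_part r) (ev (gd_part r)))"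
      by (rule der_lemma[OF dvr sr, symmetric])
    finally show ?thesis using IHl IHr Prec by simp
  qed
qed

end




lemma pmap_fin: "finite {s. p s \<noteq> 0} \<Longrightarrow> finite {t. pmap g p t \<noteq> (0::'k::comm_monoid_add)}"
proof -
  assume fin: "finite {s. p s \<noteq> 0}"
  have "{t. pmap g p t \<noteq> 0} \<subseteq> g ` {s. p s \<noteq> 0}"
  proof
    fix t assume "t \<in> {t. pmap g p t \<noteq> 0}"
    then have "{s. p s \<noteq> 0 \<and> g s = t} \<noteq> {}" unfolding pmap_def by force
    then show "t \<in> g ` {s. p s \<noteq> 0}" by auto
  qed
  then show ?thesis using fin by (meson finite_imageI finite_subset)
qed

lemma sum_fun_app: "(\<Sum>x\<in>A. f x) y = (\<Sum>x\<in>A. f x y)"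
  by (induction A rule: infinite_finite_induct) auto

lemma sum_times_single: "(\<Sum>x\<in>A \<times> {w}. h x) = (\<Sum>u\<in>A. h (u, w))"
proof -
  have "A \<times> {w} = (\<lambda>u. (u, w)) ` A" by auto
  then show ?thesis by (simp add: sum.reindex inj_on_def)
qed

lemma sum_single_times: "(\<Sum>x\<in>{w} \<times> A. h x) = (\<Sum>u\<in>A. h (w, u))"
proof -
  have "{w} \<times> A = (\<lambda>u. (w, u)) ` A" by auto
  then show ?thesis by (simp add: sum.reindex inj_on_def)
qed

theorem mainTheorem11:
  fixes S :: "(unit btree \<Rightarrow> 'k::field) set"
    and f :: "op3 btree \<Rightarrow> 'k"
    and n :: nat
    and sc :: "'k \<Rightarrow> 'a::ab_group_add \<Rightarrow> 'a"
    and m :: "'a \<Rightarrow> 'a \<Rightarrow> 'a"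
    and d :: "'a \<Rightarrow> 'a"
    and a :: "nat \<Rightarrow> 'a"
  assumes S_multilinear: "\<forall>p\<in>S. \<exists>k. multilin k p"
    and f_multilinear: "multilin n f"
    and f_identity: "white_identity S f"
    and A_in_Var: "in_variety S sc m"
    and d_derivation: "is_derivation sc m d"
  shows "evalp sc (dstar_ops m d) a f = 0"
proof -
  have alg: "is_algebra sc m" and Sid: "\<And>p b. p \<in> S \<Longrightarrow> evalp sc (\<lambda>_. m) b p = 0"
    using A_in_Var unfolding in_variety_def by blast+
  note der = d_derivation
  have ms: "module sc" by (rule ms[OF alg der])
  interpret module sc by (rule ms)
  define Tf where "Tf = {t. f t \<noteq> 0}"
  have finTf: "finite Tf" using f_multilinear unfolding multilin_def Tf_def by blast
  define B where "B = (\<Sum>t\<in>Tf. nn t)"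
  define Phi where "Phi p = Lu sc m d a n B (fst p) (ev (snd p))" for p
  have Sfin: "\<And>p. p \<in> S \<Longrightarrow> finite {t. p t \<noteq> 0}"
    using S_multilinear unfolding multilin_def by blast
  have gen: "finite {x. b x \<noteq> 0} \<and> lsum sc Phi b = 0"
    if b: "b \<in> {tens r (delta w) |r w. r \<in> consq S} \<union> {tens (delta w) r |r w. r \<in> consq gd_rels}" for b
  proof -
    from b consider (V) r w where "b = tens r (delta w)" "r \<in> consq S"
      | (G) r w where "b = tens (delta w) r" "r \<in> consq gd_rels" by blast
    then show ?thesis
    proof cases
      case V
      from V(2) obtain p g c h where r: "r = pmap (\<lambda>s. subst (\<lambda>i. if i = h then subst g s else Leaf i) c) p"
        and p: "p \<in> S" and h: "length (filter (\<lambda>i. i = h) (leaves c)) = 1"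
        unfolding consq_def by blast
      have finr: "finite {u. r u \<noteq> 0}" unfolding r by (rule pmap_fin[OF Sfin[OF p]])
      have sub: "{x. b x \<noteq> 0} \<subseteq> {u. r u \<noteq> 0} \<times> {w}"
        by (auto simp: V(1) tens_def delta_def split: if_splits)
      have finb: "finite {x. b x \<noteq> 0}" by (rule finite_subset[OF sub]) (use finr in simp)
      have rz: "evalp sc (\<lambda>_. m) (asg d a \<sigma>) r = 0" for \<sigma>
        unfolding r by (rule consq_zero[OF ms _ Sfin[OF p] Sid[OF p] h]) (rule bm[OF alg der])
      have "lsum sc Phi b = (\<Sum>x\<in>{u. r u \<noteq> 0} \<times> {w}. sc (b x) (Phi x))"
        by (rule lsum_superset[OF ms _ sub]) (use finr in simp)
      also have "\<dots> = (\<Sum>u\<in>{u. r u \<noteq> 0}. sc (r u) (Phi (u, w)))"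
        by (simp add: sum_times_single V(1) tens_def delta_def)
      also have "\<dots> = (\<Sum>u\<in>{u. r u \<noteq> 0}. \<Sum>\<sigma>\<in>Sg n B. sc (ev w \<sigma>) (sc (r u) (Ev m d a u \<sigma>)))"
        by (simp add: Phi_def Lu_def scale_sum_right scale_left_commute mult.commute)
      also have "\<dots> = (\<Sum>\<sigma>\<in>Sg n B. sc (ev w \<sigma>) (\<Sum>u\<in>{u. r u \<noteq> 0}. sc (r u) (Ev m d a u \<sigma>)))"
        by (simp add: sum.swap[of _ "{u. r u \<noteq> 0}"] scale_sum_right)
      also have "\<dots> = 0"
        using rz by (simp add: evalp_def Ev_def)
      finally show ?thesis using finb by simp
    next
      case G
      from G(2) obtain p g c h where r: "r = pmap (\<lambda>s. subst (\<lambda>i. if i = h then subst g s else Leaf i) c) p"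
        and p: "p \<in> gd_rels" unfolding consq_def by blast
      have finp: "finite {s. p s \<noteq> 0}" using p unfolding gd_rels_def by (auto simp: lin_fin)
      have finr: "finite {v. r v \<noteq> 0}" unfolding r by (rule pmap_fin[OF finp])
      have sub: "{x. b x \<noteq> 0} \<subseteq> {w} \<times> {v. r v \<noteq> 0}"
        by (auto simp: G(1) tens_def delta_def split: if_splits)
      have finb: "finite {x. b x \<noteq> 0}" by (rule finite_subset[OF sub]) (use finr in simp)
      have rz: "(\<Sum>v\<in>{v. r v \<noteq> 0}. r v * ev v \<sigma>) = 0" for \<sigma>
      proof -
        have "evalp scC gdC Xg r = (0 :: sg \<Rightarrow> 'k)" by (rule gd_consq_zero[OF G(2)])
        then have "evalp scC gdC Xg r \<sigma> = (0 :: 'k)" by simp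
        then show ?thesis by (simp add: evalp_def sum_fun_app scC_def ev_def)
      qed
      have "lsum sc Phi b = (\<Sum>x\<in>{w} \<times> {v. r v \<noteq> 0}. sc (b x) (Phi x))"
        by (rule lsum_superset[OF ms _ sub]) (use finr in simp)
      also have "\<dots> = (\<Sum>v\<in>{v. r v \<noteq> 0}. sc (r v) (Phi (w, v)))"
        by (simp add: sum_single_times G(1) tens_def delta_def)
      also have "\<dots> = (\<Sum>v\<in>{v. r v \<noteq> 0}. \<Sum>\<sigma>\<in>Sg n B. sc (r v * ev v \<sigma>) (Ev m d a w \<sigma>))"
        by (simp add: Phi_def Lu_def scale_sum_right)
      also have "\<dots> = (\<Sum>\<sigma>\<in>Sg n B. sc (\<Sum>v\<in>{v. r v \<noteq> 0}. r v * ev v \<sigma>) (Ev m d a w \<sigma>))"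
        by (simp add: sum.swap[of _ "{v. r v \<noteq> 0}"] scale_sum_left)
      also have "\<dots> = 0"
        using rz by simp
      finally show ?thesis using finb by simp
    qed
  qed
  have kern: "finite {x. Q x \<noteq> 0} \<and> lsum sc Phi Q = 0" if "Q \<in> hadamard_kernel S" for Q
    using that unfolding hadamard_kernel_def
  proof (induction Q rule: lspan.induct)
    case zero
    then show ?case by (simp add: lsum_def)
  next
    case (step b v c)
    have gb: "finite {x. b x \<noteq> 0}" "lsum sc Phi b = 0" using gen[OF step(1)] by blast+
    have finc: "finite {x. c * b x \<noteq> 0}" by (rule finite_subset[OF _ gb(1)]) auto
    have "{x. c * b x + v x \<noteq> 0} \<subseteq> {x. b x \<noteq> 0} \<union> {x. v x \<noteq> 0}" by auto
    then have f1: "finite {x. c * b x + v x \<noteq> 0}" using gb(1) step(3) by (meson finite_UnI finite_subset)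
    have "lsum sc Phi (\<lambda>x. c * b x + v x) = lsum sc Phi (\<lambda>x. c * b x) + lsum sc Phi v"
      by (rule lsum_add[OF ms finc]) (use step(3) in blast)
    also have "\<dots> = 0" using lsum_scale[OF ms gb(1), of Phi c] gb(2) step(3) by simp
    finally show ?case using f1 by simp
  qed
  have "lsum sc Phi (pmap (\<lambda>t. (var_part t, gd_part t)) f) = 0"
    using kern f_identity unfolding white_identity_def by blast
  moreover have "lsum sc Phi (pmap (\<lambda>t. (var_part t, gd_part t)) f) =
      (\<Sum>t\<in>Tf. sc (f t) (Phi (var_part t, gd_part t)))"
    unfolding Tf_def by (rule lsum_pmap[OF ms]) (use finTf Tf_def in simp)
  moreover have "(\<Sum>t\<in>Tf. sc (f t) (Phi (var_part t, gd_part t))) = evalp sc (dstar_ops m d) a f"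
    unfolding evalp_def Tf_def[symmetric]
  proof (rule sum.cong[OF refl])
    fix t assume t: "t \<in> Tf"
    have dt: "distinct (leaves t)" and st: "set (leaves t) = {0..<n}"
      using f_multilinear t unfolding multilin_def Tf_def by blast+
    have "nn t \<le> B" unfolding B_def using finTf t by (simp add: member_le_sum)
    then have "Phi (var_part t, gd_part t) = eval (dstar_ops m d) a t"
    proof -
      have "set (leaves t) \<subseteq> {..<n}" using st by auto
      then show ?thesis unfolding Phi_def fst_conv snd_conv
        using key_lemma[OF alg der dt, where N=n and B=B and a=a] \<open>nn t \<le> B\<close> by blast
    qed
    then show "sc (f t) (Phi (var_part t, gd_part t)) = sc (f t) (eval (dstar_ops m d) a t)" by simp
  qed
  ultimately show ?thesis by simp
qed


end
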